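(* Let $\mathbf{D}$ be a 2-category with an enhanced factorization system $(\mathcal{E},\mathcal{M})$ and $\mathbf{C}$ a small 2-category. If $(\mathcal{E},\mathcal{M})$ separates parallel pairs, every 1-cell in $\mathcal{E}$ is a 2-epimorphism, every 1-cell in $\mathcal{M}$ is a 2-monomorphism, and post-composition with 1-cells in $\mathcal{M}$ creates invertible 2-cells, then the enhanced factorization system $(\mathcal{E}^{\mathbf{C}},\mathcal{M}^{\mathbf{C}})$ on $\mathbf{D}^{\mathbf{C}}$ is rigid: for every $\mu\colon F\Rightarrow G$ in $\mathcal{M}^{\mathbf{C}}$ and 2-natural transformation $\alpha\colon G\Rightarrow F$, if $\mu\alpha\cong\mathrm{id}_G$ then $\alpha\mu\cong\mathrm{id}_F$.
   Context: For a 2-category $\mathbf{A}$, an enhanced factorization system on $\mathbf{A}$ is a pair $(\mathcal{E},\mathcal{M})$ of classes of 1-cells of $\mathbf{A}$, each containing all isomorphisms, such that: (i) every 1-cell $\alpha$ factors (not necessarily uniquely) as $\alpha=\mu\circ\varepsilon$ with $\varepsilon\in\mathcal{E}$, $\mu\in\mathcal{M}$; (ii) given $\varepsilon\colon F\to F'$ in $\mathcal{E}$, $\mu\colon G\to G'$ in $\mathcal{M}$, 1-cells $\alpha\colon F\to G$, $\alpha'\colon F'\to G'$ and an invertible 2-cell $\Psi\colon \alpha'\varepsilon\Rightarrow\mu\alpha$, there is a unique pair $(\delta,\widetilde\Psi)$ with $\delta\colon F'\to G$ a 1-cell and $\widetilde\Psi\colon\alpha'\Rightarrow\mu\delta$ an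 invertible 2-cell such that $\delta\varepsilon=\alpha$ and the whiskering $\widetilde\Psi\varepsilon=\Psi$; moreover if $\Psi$ is an identity then $\mu\delta=\alpha'$ and $\widetilde\Psi$ is an identity; (iii) given $\varepsilon\colon F\to F'$ in $\mathcal{E}$, $\mu\colon G\to G'$ in $\mathcal{M}$, parallel 1-cells $\alpha_1,\alpha_2\colon F\to G$ and $\alpha_1',\alpha_2'\colon F'\to G'$ with $\alpha_i'\varepsilon=\mu\alpha_i$ ($i=1,2$), and 2-cells $\Phi\colon\alpha_1\Rightarrow\alpha_2$, $\Phi'\colon\alpha_1'\Rightarrow\alpha_2'$ with $\mu\Phi=\Phi'\varepsilon$, let $\delta_i\colon F'\to G$ be the unique 1-cells with $\delta_i\varepsilon=\alpha_i$ and $\mu\delta_i=\alpha_i'$ (from (ii) with identity 2-cell); then there is a unique 2-cell $\Delta\colon\delta_1\Rightarrow\delta_2$ with $\Delta\varepsilon=\Phi$ and $\mu\Delta=\Phi'$. It is rigid if moreover: for 1-cells $\mu\colon F\to G$ in $\mathcal{M}$ and $\alpha\colon G\to F$, if $\mu\alpha\cong\mathrm{id}_G$ then $\alpha\mu\cong\mathrm{id}_F$. $(\mathcal{E},\mathcal{M})$ separates parallel pairs if whenever $\alpha,\beta\colon F\to G$ are parallel 1-cells for which there exist $\varepsilon\in\mathcal{E}$ with target $F$ and $\alpha\varepsilon=\beta\varepsilon$, and $\mu\in\mathcal{M}$ with source $G$ and $\mu\alpha=\mu\beta$, then $\alpha=\beta$. A 1-cell $\varepsilon\colon F\to G$ is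 a 2-epimorphism if for all 1-cells $\beta,\beta'\colon G\to H$ and 2-cells $\Psi,\Psi'\colon\beta\Rightarrow\beta'$, $\Psi\varepsilon=\Psi'\varepsilon$ implies $\Psi=\Psi'$. A 1-cell $\mu\colon G\to H$ is a 2-monomorphism if for all 1-cells $\beta,\beta'\colon F\to G$ and 2-cells $\Psi,\Psi'\colon\beta\Rightarrow\beta'$, $\mu\Psi=\mu\Psi'$ implies $\Psi=\Psi'$. Post-composition with a 1-cell $\mu$ creates invertible 2-cells if for all parallel 1-cells $\alpha,\beta$ (composable with $\mu$) and every invertible 2-cell $\Psi\colon\mu\alpha\Rightarrow\mu\beta$ there is a unique invertible 2-cell $\widehat\Psi\colon\alpha\Rightarrow\beta$ with $\mu\widehat\Psi=\Psi$; post-composition with 1-cells in $\mathcal{M}$ creates invertible 2-cells if this holds for every $\mu\in\mathcal{M}$. $\mathbf{D}^{\mathbf{C}}$ is the 2-category of 2-functors $\mathbf{C}\to\mathbf{D}$, 2-natural transformations, and modifications. $\mathcal{E}^{\mathbf{C}}$ (resp. $\mathcal{M}^{\mathbf{C}}$) is the class of 2-natural transformations all of whose components lie in $\mathcal{E}$ (resp. $\mathcal{M}$). *)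

theory Defs
  imports Main
begin

text \<open>A (strict) 2-category with objects of type 'o, 1-cells of type 'm and
2-cells of type 'c, each carried by a set. mcomp g f is g after f;
vcomp b a is the vertical composite (first a, then b); hcomp b a is the
horizontal composite (a on the right/first, b on the left/second).\<close>

record ('o, 'm, 'c) two_cat =
  Obj   :: "'o set"
  Mor   :: "'m set"
  msrc  :: "'m \<Rightarrow> 'o"
  mtgt  :: "'m \<Rightarrow> 'o"
  mid   :: "'o \<Rightarrow> 'm"
  mcomp :: "'m \<Rightarrow> 'm \<Rightarrow> 'm"
  Cel   :: "'c set"
  cdom  :: "'c \<Rightarrow> 'm"
  ccod  :: "'c \<Rightarrow> 'm"
  cid   :: "'m \<Rightarrow> 'c"
  vcomp :: "'c \<Rightarrow> 'c \<Rightarrow> 'c"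
  hcomp :: "'c \<Rightarrow> 'c \<Rightarrow> 'c"

definition two_category :: "('o, 'm, 'c) two_cat \<Rightarrow> bool" where
  "two_category A \<longleftrightarrow>
     \<comment> \<open>1-cells form a category\<close>
     (\<forall>f\<in>Mor A. msrc A f \<in> Obj A \<and> mtgt A f \<in> Obj A) \<and>
     (\<forall>x\<in>Obj A. mid A x \<in> Mor A \<and> msrc A (mid A x) = x \<and> mtgt A (mid A x) = x) \<and>
     (\<forall>f\<in>Mor A. \<forall>g\<in>Mor A. mtgt A f = msrc A g \<longrightarrow>
        mcomp A g f \<in> Mor A \<and> msrc A (mcomp A g f) = msrc A f \<and> mtgt A (mcomp A g f) = mtgt A g) \<and>
     (\<forall>f\<in>Mor A. \<forall>g\<in>Mor A. \<forall>h\<in>Mor A. mtgt A f = msrc A g \<and> mtgt A g = msrc A h \<longrightarrow>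
        mcomp A h (mcomp A g f) = mcomp A (mcomp A h g) f) \<and>
     (\<forall>f\<in>Mor A. mcomp A f (mid A (msrc A f)) = f \<and> mcomp A (mid A (mtgt A f)) f = f) \<and>
     \<comment> \<open>2-cells between parallel 1-cells; vertical composition is a category\<close>
     (\<forall>a\<in>Cel A. cdom A a \<in> Mor A \<and> ccod A a \<in> Mor A \<and>
        msrc A (cdom A a) = msrc A (ccod A a) \<and> mtgt A (cdom A a) = mtgt A (ccod A a)) \<and>
     (\<forall>f\<in>Mor A. cid A f \<in> Cel A \<and> cdom A (cid A f) = f \<and> ccod A (cid A f) = f) \<and>
     (\<forall>a\<in>Cel A. \<forall>b\<in>Cel A. ccod A a = cdom A b \<longrightarrow>
        vcomp A b a \<in> Cel A \<and> cdom A (vcomp A b a) = cdom A a \<and> ccod A (vcomp A b a) = ccod A b) \<and>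
     (\<forall>a\<in>Cel A. \<forall>b\<in>Cel A. \<forall>c\<in>Cel A. ccod A a = cdom A b \<and> ccod A b = cdom A c \<longrightarrow>
        vcomp A c (vcomp A b a) = vcomp A (vcomp A c b) a) \<and>
     (\<forall>a\<in>Cel A. vcomp A a (cid A (cdom A a)) = a \<and> vcomp A (cid A (ccod A a)) a = a) \<and>
     \<comment> \<open>horizontal composition\<close>
     (\<forall>a\<in>Cel A. \<forall>b\<in>Cel A. mtgt A (cdom A a) = msrc A (cdom A b) \<longrightarrow>
        hcomp A b a \<in> Cel A \<and> cdom A (hcomp A b a) = mcomp A (cdom A b) (cdom A a) \<and>
        ccod A (hcomp A b a) = mcomp A (ccod A b) (ccod A a)) \<and>
     (\<forall>a\<in>Cel A. \<forall>b\<in>Cel A. \<forall>c\<in>Cel A.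
        mtgt A (cdom A a) = msrc A (cdom A b) \<and> mtgt A (cdom A b) = msrc A (cdom A c) \<longrightarrow>
        hcomp A c (hcomp A b a) = hcomp A (hcomp A c b) a) \<and>
     (\<forall>a\<in>Cel A. hcomp A a (cid A (mid A (msrc A (cdom A a)))) = a \<and>
        hcomp A (cid A (mid A (mtgt A (cdom A a)))) a = a) \<and>
     (\<forall>f\<in>Mor A. \<forall>g\<in>Mor A. mtgt A f = msrc A g \<longrightarrow>
        hcomp A (cid A g) (cid A f) = cid A (mcomp A g f)) \<and>
     \<comment> \<open>interchange law\<close>
     (\<forall>a\<in>Cel A. \<forall>a'\<in>Cel A. \<forall>b\<in>Cel A. \<forall>b'\<in>Cel A.
        ccod A a = cdom A a' \<and> ccod A b = cdom A b' \<and> mtgt A (cdom A a) = msrc A (cdom A b) \<longrightarrow>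
        vcomp A (hcomp A b' a') (hcomp A b a) = hcomp A (vcomp A b' b) (vcomp A a' a))"

text \<open>Whiskerings: lwhisk A \<mu> \<Phi> is \<mu>\<Phi> (post-composition), rwhisk A \<Phi> \<epsilon> is \<Phi>\<epsilon>.\<close>

definition lwhisk :: "('o, 'm, 'c) two_cat \<Rightarrow> 'm \<Rightarrow> 'c \<Rightarrow> 'c" where
  "lwhisk A m a = hcomp A (cid A m) a"

definition rwhisk :: "('o, 'm, 'c) two_cat \<Rightarrow> 'c \<Rightarrow> 'm \<Rightarrow> 'c" where
  "rwhisk A a e = hcomp A a (cid A e)"

definition iso1 :: "('o, 'm, 'c) two_cat \<Rightarrow> 'm \<Rightarrow> bool" where
  "iso1 A f \<longleftrightarrow> f \<in> Mor A \<and> (\<exists>g\<in>Mor A. msrc A g = mtgt A f \<and> mtgt A g = msrc A f \<and>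
      mcomp A g f = mid A (msrc A f) \<and> mcomp A f g = mid A (mtgt A f))"

definition iso2 :: "('o, 'm, 'c) two_cat \<Rightarrow> 'c \<Rightarrow> bool" where
  "iso2 A a \<longleftrightarrow> a \<in> Cel A \<and> (\<exists>b\<in>Cel A. cdom A b = ccod A a \<and> ccod A b = cdom A a \<and>
      vcomp A b a = cid A (cdom A a) \<and> vcomp A a b = cid A (ccod A a))"

definition enhanced_fs :: "('o, 'm, 'c) two_cat \<Rightarrow> 'm set \<Rightarrow> 'm set \<Rightarrow> bool" where
  "enhanced_fs A E M \<longleftrightarrow>
     E \<subseteq> Mor A \<and> M \<subseteq> Mor A \<and>
     {f. iso1 A f} \<subseteq> E \<and> {f. iso1 A f} \<subseteq> M \<and>
     \<comment> \<open>(i) factorization\<close>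
     (\<forall>\<alpha>\<in>Mor A. \<exists>\<epsilon>\<in>E. \<exists>\<mu>\<in>M. mtgt A \<epsilon> = msrc A \<mu> \<and> mcomp A \<mu> \<epsilon> = \<alpha>) \<and>
     \<comment> \<open>(ii) lifting of squares commuting up to invertible 2-cell\<close>
     (\<forall>\<epsilon>\<in>E. \<forall>\<mu>\<in>M. \<forall>\<alpha>\<in>Mor A. \<forall>\<alpha>'\<in>Mor A. \<forall>\<Psi>.
        msrc A \<alpha> = msrc A \<epsilon> \<and> msrc A \<alpha>' = mtgt A \<epsilon> \<and>
        mtgt A \<alpha> = msrc A \<mu> \<and> mtgt A \<alpha>' = mtgt A \<mu> \<and>
        iso2 A \<Psi> \<and> cdom A \<Psi> = mcomp A \<alpha>' \<epsilon> \<and> ccod A \<Psi> = mcomp A \<mu> \<alpha> \<longrightarrow>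
        (\<exists>!p. case p of (\<delta>, \<Psi>t) \<Rightarrow>
            \<delta> \<in> Mor A \<and> msrc A \<delta> = mtgt A \<epsilon> \<and> mtgt A \<delta> = msrc A \<mu> \<and>
            iso2 A \<Psi>t \<and> cdom A \<Psi>t = \<alpha>' \<and> ccod A \<Psi>t = mcomp A \<mu> \<delta> \<and>
            mcomp A \<delta> \<epsilon> = \<alpha> \<and> rwhisk A \<Psi>t \<epsilon> = \<Psi>) \<and>
        (\<Psi> = cid A (cdom A \<Psi>) \<longrightarrow>
           (\<forall>\<delta> \<Psi>t. \<delta> \<in> Mor A \<and> msrc A \<delta> = mtgt A \<epsilon> \<and> mtgt A \<delta> = msrc A \<mu> \<and>
              iso2 A \<Psi>t \<and> cdom A \<Psi>t = \<alpha>' \<and> ccod A \<Psi>t = mcomp A \<mu> \<delta> \<and>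
              mcomp A \<delta> \<epsilon> = \<alpha> \<and> rwhisk A \<Psi>t \<epsilon> = \<Psi> \<longrightarrow>
              mcomp A \<mu> \<delta> = \<alpha>' \<and> \<Psi>t = cid A \<alpha>'))) \<and>
     \<comment> \<open>(iii) lifting of 2-cells\<close>
     (\<forall>\<epsilon>\<in>E. \<forall>\<mu>\<in>M. \<forall>\<alpha>1\<in>Mor A. \<forall>\<alpha>2\<in>Mor A. \<forall>\<alpha>1'\<in>Mor A. \<forall>\<alpha>2'\<in>Mor A.
        \<forall>\<Phi>\<in>Cel A. \<forall>\<Phi>'\<in>Cel A. \<forall>\<delta>1\<in>Mor A. \<forall>\<delta>2\<in>Mor A.
        msrc A \<alpha>1 = msrc A \<epsilon> \<and> mtgt A \<alpha>1 = msrc A \<mu> \<and>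
        msrc A \<alpha>2 = msrc A \<epsilon> \<and> mtgt A \<alpha>2 = msrc A \<mu> \<and>
        msrc A \<alpha>1' = mtgt A \<epsilon> \<and> mtgt A \<alpha>1' = mtgt A \<mu> \<and>
        msrc A \<alpha>2' = mtgt A \<epsilon> \<and> mtgt A \<alpha>2' = mtgt A \<mu> \<and>
        mcomp A \<alpha>1' \<epsilon> = mcomp A \<mu> \<alpha>1 \<and> mcomp A \<alpha>2' \<epsilon> = mcomp A \<mu> \<alpha>2 \<and>
        cdom A \<Phi> = \<alpha>1 \<and> ccod A \<Phi> = \<alpha>2 \<and> cdom A \<Phi>' = \<alpha>1' \<and> ccod A \<Phi>' = \<alpha>2' \<and>
        lwhisk A \<mu> \<Phi> = rwhisk A \<Phi>' \<epsilon> \<and>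
        msrc A \<delta>1 = mtgt A \<epsilon> \<and> mtgt A \<delta>1 = msrc A \<mu> \<and>
        msrc A \<delta>2 = mtgt A \<epsilon> \<and> mtgt A \<delta>2 = msrc A \<mu> \<and>
        mcomp A \<delta>1 \<epsilon> = \<alpha>1 \<and> mcomp A \<mu> \<delta>1 = \<alpha>1' \<and>
        mcomp A \<delta>2 \<epsilon> = \<alpha>2 \<and> mcomp A \<mu> \<delta>2 = \<alpha>2' \<longrightarrow>
        (\<exists>!\<Delta>. \<Delta> \<in> Cel A \<and> cdom A \<Delta> = \<delta>1 \<and> ccod A \<Delta> = \<delta>2 \<and>
              rwhisk A \<Delta> \<epsilon> = \<Phi> \<and> lwhisk A \<mu> \<Delta> = \<Phi>'))"

definition separates_parallel_pairs :: "('o, 'm, 'c) two_cat \<Rightarrow> 'm set \<Rightarrow> 'm set \<Rightarrow> bool" where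
  "separates_parallel_pairs A E M \<longleftrightarrow>
     (\<forall>\<alpha>\<in>Mor A. \<forall>\<beta>\<in>Mor A.
        msrc A \<alpha> = msrc A \<beta> \<and> mtgt A \<alpha> = mtgt A \<beta> \<and>
        (\<exists>\<epsilon>\<in>E. mtgt A \<epsilon> = msrc A \<alpha> \<and> mcomp A \<alpha> \<epsilon> = mcomp A \<beta> \<epsilon>) \<and>
        (\<exists>\<mu>\<in>M. msrc A \<mu> = mtgt A \<alpha> \<and> mcomp A \<mu> \<alpha> = mcomp A \<mu> \<beta>) \<longrightarrow> \<alpha> = \<beta>)"

definition two_epi :: "('o, 'm, 'c) two_cat \<Rightarrow> 'm \<Rightarrow> bool" where
  "two_epi A e \<longleftrightarrow>
     (\<forall>\<Psi>\<in>Cel A. \<forall>\<Psi>'\<in>Cel A.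
        msrc A (cdom A \<Psi>) = mtgt A e \<and> cdom A \<Psi>' = cdom A \<Psi> \<and> ccod A \<Psi>' = ccod A \<Psi> \<and>
        rwhisk A \<Psi> e = rwhisk A \<Psi>' e \<longrightarrow> \<Psi> = \<Psi>')"

definition two_mono :: "('o, 'm, 'c) two_cat \<Rightarrow> 'm \<Rightarrow> bool" where
  "two_mono A m \<longleftrightarrow>
     (\<forall>\<Psi>\<in>Cel A. \<forall>\<Psi>'\<in>Cel A.
        mtgt A (cdom A \<Psi>) = msrc A m \<and> cdom A \<Psi>' = cdom A \<Psi> \<and> ccod A \<Psi>' = ccod A \<Psi> \<and>
        lwhisk A m \<Psi> = lwhisk A m \<Psi>' \<longrightarrow> \<Psi> = \<Psi>')"

definition creates_inv_2cells :: "('o, 'm, 'c) two_cat \<Rightarrow> 'm \<Rightarrow> bool" where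
  "creates_inv_2cells A m \<longleftrightarrow>
     (\<forall>\<alpha>\<in>Mor A. \<forall>\<beta>\<in>Mor A. \<forall>\<Psi>.
        msrc A \<alpha> = msrc A \<beta> \<and> mtgt A \<alpha> = msrc A m \<and> mtgt A \<beta> = msrc A m \<and>
        iso2 A \<Psi> \<and> cdom A \<Psi> = mcomp A m \<alpha> \<and> ccod A \<Psi> = mcomp A m \<beta> \<longrightarrow>
        (\<exists>!\<Psi>h. iso2 A \<Psi>h \<and> cdom A \<Psi>h = \<alpha> \<and> ccod A \<Psi>h = \<beta> \<and> lwhisk A m \<Psi>h = \<Psi>))"

record ('o1, 'm1, 'c1, 'o2, 'm2, 'c2) two_functor =
  fobj  :: "'o1 \<Rightarrow> 'o2"
  fmor  :: "'m1 \<Rightarrow> 'm2"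
  fcell :: "'c1 \<Rightarrow> 'c2"

definition is_two_functor ::
  "('o1, 'm1, 'c1) two_cat \<Rightarrow> ('o2, 'm2, 'c2) two_cat \<Rightarrow>
   ('o1, 'm1, 'c1, 'o2, 'm2, 'c2) two_functor \<Rightarrow> bool" where
  "is_two_functor C D F \<longleftrightarrow>
     (\<forall>x\<in>Obj C. fobj F x \<in> Obj D) \<and>
     (\<forall>f\<in>Mor C. fmor F f \<in> Mor D \<and> msrc D (fmor F f) = fobj F (msrc C f) \<and>
                 mtgt D (fmor F f) = fobj F (mtgt C f)) \<and>
     (\<forall>a\<in>Cel C. fcell F a \<in> Cel D \<and> cdom D (fcell F a) = fmor F (cdom C a) \<and>
                 ccod D (fcell F a) = fmor F (ccod C a)) \<and>
     (\<forall>x\<in>Obj C. fmor F (mid C x) = mid D (fobj F x)) \<and>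
     (\<forall>f\<in>Mor C. \<forall>g\<in>Mor C. mtgt C f = msrc C g \<longrightarrow>
        fmor F (mcomp C g f) = mcomp D (fmor F g) (fmor F f)) \<and>
     (\<forall>f\<in>Mor C. fcell F (cid C f) = cid D (fmor F f)) \<and>
     (\<forall>a\<in>Cel C. \<forall>b\<in>Cel C. ccod C a = cdom C b \<longrightarrow>
        fcell F (vcomp C b a) = vcomp D (fcell F b) (fcell F a)) \<and>
     (\<forall>a\<in>Cel C. \<forall>b\<in>Cel C. mtgt C (cdom C a) = msrc C (cdom C b) \<longrightarrow>
        fcell F (hcomp C b a) = hcomp D (fcell F b) (fcell F a))"

definition is_two_nat ::
  "('o1, 'm1, 'c1) two_cat \<Rightarrow> ('o2, 'm2, 'c2) two_cat \<Rightarrow>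
   ('o1, 'm1, 'c1, 'o2, 'm2, 'c2) two_functor \<Rightarrow> ('o1, 'm1, 'c1, 'o2, 'm2, 'c2) two_functor \<Rightarrow>
   ('o1 \<Rightarrow> 'm2) \<Rightarrow> bool" where
  "is_two_nat C D F G \<theta> \<longleftrightarrow>
     (\<forall>x\<in>Obj C. \<theta> x \<in> Mor D \<and> msrc D (\<theta> x) = fobj F x \<and> mtgt D (\<theta> x) = fobj G x) \<and>
     (\<forall>f\<in>Mor C. mcomp D (fmor G f) (\<theta> (msrc C f)) = mcomp D (\<theta> (mtgt C f)) (fmor F f)) \<and>
     (\<forall>a\<in>Cel C. hcomp D (fcell G a) (cid D (\<theta> (msrc C (cdom C a)))) =
                 hcomp D (cid D (\<theta> (mtgt C (cdom C a)))) (fcell F a))"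

definition is_modification ::
  "('o1, 'm1, 'c1) two_cat \<Rightarrow> ('o2, 'm2, 'c2) two_cat \<Rightarrow>
   ('o1, 'm1, 'c1, 'o2, 'm2, 'c2) two_functor \<Rightarrow> ('o1, 'm1, 'c1, 'o2, 'm2, 'c2) two_functor \<Rightarrow>
   ('o1 \<Rightarrow> 'm2) \<Rightarrow> ('o1 \<Rightarrow> 'm2) \<Rightarrow> ('o1 \<Rightarrow> 'c2) \<Rightarrow> bool" where
  "is_modification C D F G \<theta> \<theta>' \<Gamma> \<longleftrightarrow>
     (\<forall>x\<in>Obj C. \<Gamma> x \<in> Cel D \<and> cdom D (\<Gamma> x) = \<theta> x \<and> ccod D (\<Gamma> x) = \<theta>' x) \<and>
     (\<forall>a\<in>Cel C. hcomp D (fcell G a) (\<Gamma> (msrc C (cdom C a))) =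
                 hcomp D (\<Gamma> (mtgt C (cdom C a))) (fcell F a))"

definition nat_comp :: "('o2, 'm2, 'c2) two_cat \<Rightarrow> ('o1 \<Rightarrow> 'm2) \<Rightarrow> ('o1 \<Rightarrow> 'm2) \<Rightarrow> ('o1 \<Rightarrow> 'm2)" where
  "nat_comp D \<beta> \<alpha> = (\<lambda>x. mcomp D (\<beta> x) (\<alpha> x))"

definition nat_id :: "('o2, 'm2, 'c2) two_cat \<Rightarrow> ('o1, 'm1, 'c1, 'o2, 'm2, 'c2) two_functor \<Rightarrow> ('o1 \<Rightarrow> 'm2)" where
  "nat_id D F = (\<lambda>x. mid D (fobj F x))"

definition nat_iso ::
  "('o1, 'm1, 'c1) two_cat \<Rightarrow> ('o2, 'm2, 'c2) two_cat \<Rightarrow>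
   ('o1, 'm1, 'c1, 'o2, 'm2, 'c2) two_functor \<Rightarrow> ('o1, 'm1, 'c1, 'o2, 'm2, 'c2) two_functor \<Rightarrow>
   ('o1 \<Rightarrow> 'm2) \<Rightarrow> ('o1 \<Rightarrow> 'm2) \<Rightarrow> bool" where
  "nat_iso C D F G \<theta> \<theta>' \<longleftrightarrow>
     (\<exists>\<Gamma> \<Gamma>'. is_modification C D F G \<theta> \<theta>' \<Gamma> \<and> is_modification C D F G \<theta>' \<theta> \<Gamma>' \<and>
        (\<forall>x\<in>Obj C. vcomp D (\<Gamma>' x) (\<Gamma> x) = cid D (\<theta> x) \<and> vcomp D (\<Gamma> x) (\<Gamma>' x) = cid D (\<theta>' x)))"

definition rigid_functor_cat ::
  "('o1, 'm1, 'c1) two_cat \<Rightarrow> ('o2, 'm2, 'c2) two_cat \<Rightarrow> 'm2 set \<Rightarrow> bool" where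
  "rigid_functor_cat C D M \<longleftrightarrow>
     (\<forall>(F :: ('o1, 'm1, 'c1, 'o2, 'm2, 'c2) two_functor) G \<mu> \<alpha>.
        is_two_functor C D F \<and> is_two_functor C D G \<and>
        is_two_nat C D F G \<mu> \<and> (\<forall>x\<in>Obj C. \<mu> x \<in> M) \<and>
        is_two_nat C D G F \<alpha> \<and>
        nat_iso C D G G (nat_comp D \<mu> \<alpha>) (nat_id D G) \<longrightarrow>
        nat_iso C D F F (nat_comp D \<alpha> \<mu>) (nat_id D F))"

end

theory Submission imports Defs begin

locale tc = fixes D :: "('o,'m,'c) two_cat" assumes tc: "two_category D"
begin
lemmas ax1 = tc[unfolded two_category_def, THEN conjunct1]
lemmas ax2 = tc[unfolded two_category_def, THEN conjunct2, THEN conjunct1]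
lemmas ax3 = tc[unfolded two_category_def, THEN conjunct2, THEN conjunct2, THEN conjunct1]
lemmas ax4 = tc[unfolded two_category_def, THEN conjunct2, THEN conjunct2, THEN conjunct2, THEN conjunct1]
lemmas ax5 = tc[unfolded two_category_def, THEN conjunct2, THEN conjunct2, THEN conjunct2, THEN conjunct2, THEN conjunct1]
lemmas ax6 = tc[unfolded two_category_def, THEN conjunct2, THEN conjunct2, THEN conjunct2, THEN conjunct2, THEN conjunct2, THEN conjunct1]
lemmas ax7 = tc[unfolded two_category_def, THEN conjunct2, THEN conjunct2, THEN conjunct2, THEN conjunct2, THEN conjunct2, THEN conjunct2, THEN conjunct1]
lemmas ax8 = tc[unfolded two_category_def, THEN conjunct2, THEN conjunct2, THEN conjunct2, THEN conjunct2, THEN conjunct2, THEN conjunct2, THEN conjunct2, THEN conjunct1]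
lemmas ax9 = tc[unfolded two_category_def, THEN conjunct2, THEN conjunct2, THEN conjunct2, THEN conjunct2, THEN conjunct2, THEN conjunct2, THEN conjunct2, THEN conjunct2, THEN conjunct1]
lemmas ax10 = tc[unfolded two_category_def, THEN conjunct2, THEN conjunct2, THEN conjunct2, THEN conjunct2, THEN conjunct2, THEN conjunct2, THEN conjunct2, THEN conjunct2, THEN conjunct2, THEN conjunct1]
lemmas ax11 = tc[unfolded two_category_def, THEN conjunct2, THEN conjunct2, THEN conjunct2, THEN conjunct2, THEN conjunct2, THEN conjunct2, THEN conjunct2, THEN conjunct2, THEN conjunct2, THEN conjunct2, THEN conjunct1]
lemmas ax12 = tc[unfolded two_category_def, THEN conjunct2, THEN conjunct2, THEN conjunct2, THEN conjunct2, THEN conjunct2, THEN conjunct2, THEN conjunct2, THEN conjunct2, THEN conjunct2, THEN conjunct2, THEN conjunct2, THEN conjunct1]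
lemmas ax13 = tc[unfolded two_category_def, THEN conjunct2, THEN conjunct2, THEN conjunct2, THEN conjunct2, THEN conjunct2, THEN conjunct2, THEN conjunct2, THEN conjunct2, THEN conjunct2, THEN conjunct2, THEN conjunct2, THEN conjunct2, THEN conjunct1]
lemmas ax14 = tc[unfolded two_category_def, THEN conjunct2, THEN conjunct2, THEN conjunct2, THEN conjunct2, THEN conjunct2, THEN conjunct2, THEN conjunct2, THEN conjunct2, THEN conjunct2, THEN conjunct2, THEN conjunct2, THEN conjunct2, THEN conjunct2, THEN conjunct1]
lemmas ax15 = tc[unfolded two_category_def, THEN conjunct2, THEN conjunct2, THEN conjunct2, THEN conjunct2, THEN conjunct2, THEN conjunct2, THEN conjunct2, THEN conjunct2, THEN conjunct2, THEN conjunct2, THEN conjunct2, THEN conjunct2, THEN conjunct2, THEN conjunct2]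
lemma mor_src[simp]: "f \<in> Mor D \<Longrightarrow> msrc D f \<in> Obj D" using ax1 by blast
lemma mor_tgt[simp]: "f \<in> Mor D \<Longrightarrow> mtgt D f \<in> Obj D" using ax1 by blast
lemma mid_mor[simp]: "x \<in> Obj D \<Longrightarrow> mid D x \<in> Mor D" using ax2 by blast
lemma mid_src[simp]: "x \<in> Obj D \<Longrightarrow> msrc D (mid D x) = x" using ax2 by blast
lemma mid_tgt[simp]: "x \<in> Obj D \<Longrightarrow> mtgt D (mid D x) = x" using ax2 by blast
lemma comp_mor[simp]: "f \<in> Mor D \<Longrightarrow> g \<in> Mor D \<Longrightarrow> mtgt D f = msrc D g \<Longrightarrow> mcomp D g f \<in> Mor D" using ax3 by blast
lemma comp_src[simp]: "f \<in> Mor D \<Longrightarrow> g \<in> Mor D \<Longrightarrow> mtgt D f = msrc D g \<Longrightarrow> msrc D (mcomp D g f) = msrc D f" using ax3 by blast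
lemma comp_tgt[simp]: "f \<in> Mor D \<Longrightarrow> g \<in> Mor D \<Longrightarrow> mtgt D f = msrc D g \<Longrightarrow> mtgt D (mcomp D g f) = mtgt D g" using ax3 by blast
lemma assoc: "f \<in> Mor D \<Longrightarrow> g \<in> Mor D \<Longrightarrow> h \<in> Mor D \<Longrightarrow> mtgt D f = msrc D g \<Longrightarrow> mtgt D g = msrc D h \<Longrightarrow>
  mcomp D h (mcomp D g f) = mcomp D (mcomp D h g) f" using ax4 by blast
lemma idr: "f \<in> Mor D \<Longrightarrow> mcomp D f (mid D (msrc D f)) = f" using ax5 by blast
lemma idl: "f \<in> Mor D \<Longrightarrow> mcomp D (mid D (mtgt D f)) f = f" using ax5 by blast
lemma cel_dom[simp]: "a \<in> Cel D \<Longrightarrow> cdom D a \<in> Mor D" using ax6 by blast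
lemma cel_cod[simp]: "a \<in> Cel D \<Longrightarrow> ccod D a \<in> Mor D" using ax6 by blast
lemma cel_src[simp]: "a \<in> Cel D \<Longrightarrow> msrc D (ccod D a) = msrc D (cdom D a)" using ax6 by metis
lemma cel_tgt[simp]: "a \<in> Cel D \<Longrightarrow> mtgt D (ccod D a) = mtgt D (cdom D a)" using ax6 by metis
lemma cid_cel[simp]: "f \<in> Mor D \<Longrightarrow> cid D f \<in> Cel D" using ax7 by blast
lemma cid_dom[simp]: "f \<in> Mor D \<Longrightarrow> cdom D (cid D f) = f" using ax7 by blast
lemma cid_cod[simp]: "f \<in> Mor D \<Longrightarrow> ccod D (cid D f) = f" using ax7 by blast
lemma vcomp_cel[simp]: "a \<in> Cel D \<Longrightarrow> b \<in> Cel D \<Longrightarrow> ccod D a = cdom D b \<Longrightarrow> vcomp D b a \<in> Cel D" using ax8 by blast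
lemma vcomp_dom[simp]: "a \<in> Cel D \<Longrightarrow> b \<in> Cel D \<Longrightarrow> ccod D a = cdom D b \<Longrightarrow> cdom D (vcomp D b a) = cdom D a" using ax8 by blast
lemma vcomp_cod[simp]: "a \<in> Cel D \<Longrightarrow> b \<in> Cel D \<Longrightarrow> ccod D a = cdom D b \<Longrightarrow> ccod D (vcomp D b a) = ccod D b" using ax8 by blast
lemma vidr: "a \<in> Cel D \<Longrightarrow> vcomp D a (cid D (cdom D a)) = a" using ax10 by blast
lemma hcomp_cel[simp]: "a \<in> Cel D \<Longrightarrow> b \<in> Cel D \<Longrightarrow> mtgt D (cdom D a) = msrc D (cdom D b) \<Longrightarrow> hcomp D b a \<in> Cel D" using ax11 by blast
lemma hcomp_dom[simp]: "a \<in> Cel D \<Longrightarrow> b \<in> Cel D \<Longrightarrow> mtgt D (cdom D a) = msrc D (cdom D b) \<Longrightarrow> cdom D (hcomp D b a) = mcomp D (cdom D b) (cdom D a)" using ax11 by blast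
lemma hcomp_cod[simp]: "a \<in> Cel D \<Longrightarrow> b \<in> Cel D \<Longrightarrow> mtgt D (cdom D a) = msrc D (cdom D b) \<Longrightarrow> ccod D (hcomp D b a) = mcomp D (ccod D b) (ccod D a)" using ax11 by blast
lemma hassoc: "a \<in> Cel D \<Longrightarrow> b \<in> Cel D \<Longrightarrow> c \<in> Cel D \<Longrightarrow> mtgt D (cdom D a) = msrc D (cdom D b) \<Longrightarrow> mtgt D (cdom D b) = msrc D (cdom D c) \<Longrightarrow>
   hcomp D c (hcomp D b a) = hcomp D (hcomp D c b) a" using ax12 by blast
lemma hcomp_cid: "f \<in> Mor D \<Longrightarrow> g \<in> Mor D \<Longrightarrow> mtgt D f = msrc D g \<Longrightarrow> hcomp D (cid D g) (cid D f) = cid D (mcomp D g f)" using ax14 by blast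
lemma interchange: "a \<in> Cel D \<Longrightarrow> a' \<in> Cel D \<Longrightarrow> b \<in> Cel D \<Longrightarrow> b' \<in> Cel D \<Longrightarrow>
  ccod D a = cdom D a' \<Longrightarrow> ccod D b = cdom D b' \<Longrightarrow> mtgt D (cdom D a) = msrc D (cdom D b) \<Longrightarrow>
  vcomp D (hcomp D b' a') (hcomp D b a) = hcomp D (vcomp D b' b) (vcomp D a' a)" using ax15 by blast

lemma cidcid: "f \<in> Mor D \<Longrightarrow> vcomp D (cid D f) (cid D f) = cid D f"
  using vidr[of "cid D f"] by simp

lemma lw_vcomp: "m \<in> Mor D \<Longrightarrow> a \<in> Cel D \<Longrightarrow> b \<in> Cel D \<Longrightarrow> ccod D a = cdom D b \<Longrightarrow> mtgt D (cdom D a) = msrc D m \<Longrightarrow>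
  lwhisk D m (vcomp D b a) = vcomp D (lwhisk D m b) (lwhisk D m a)"
  unfolding lwhisk_def using interchange[of a b "cid D m" "cid D m"] by (simp add: cidcid)

lemma rw_vcomp: "e \<in> Mor D \<Longrightarrow> a \<in> Cel D \<Longrightarrow> b \<in> Cel D \<Longrightarrow> ccod D a = cdom D b \<Longrightarrow> mtgt D e = msrc D (cdom D a) \<Longrightarrow>
  rwhisk D (vcomp D b a) e = vcomp D (rwhisk D b e) (rwhisk D a e)"
  unfolding rwhisk_def using interchange[of "cid D e" "cid D e" a b] by (simp add: cidcid)

lemma iso_rw:
  assumes "a \<in> Cel D" "b \<in> Cel D" "cdom D b = ccod D a" "ccod D b = cdom D a"
    "vcomp D b a = cid D (cdom D a)" "vcomp D a b = cid D (ccod D a)" "e \<in> Mor D" "mtgt D e = msrc D (cdom D a)"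
  shows "iso2 D (rwhisk D a e)"
  unfolding iso2_def
proof (intro conjI bexI)
  show "rwhisk D a e \<in> Cel D" using assms unfolding rwhisk_def by simp
  show "rwhisk D b e \<in> Cel D" using assms unfolding rwhisk_def by simp
  show "cdom D (rwhisk D b e) = ccod D (rwhisk D a e)" using assms unfolding rwhisk_def by simp
  show "ccod D (rwhisk D b e) = cdom D (rwhisk D a e)" using assms unfolding rwhisk_def by simp
  show "vcomp D (rwhisk D b e) (rwhisk D a e) = cid D (cdom D (rwhisk D a e))"
    using assms rw_vcomp[of e a b] unfolding rwhisk_def by (simp add: hcomp_cid)
  show "vcomp D (rwhisk D a e) (rwhisk D b e) = cid D (ccod D (rwhisk D a e))"
    using assms rw_vcomp[of e b a] unfolding rwhisk_def by (simp add: hcomp_cid)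
qed

lemma create:
  assumes "a \<in> Cel D" "b \<in> Cel D" "cdom D b = ccod D a" "ccod D b = cdom D a"
    "vcomp D b a = cid D (cdom D a)" "vcomp D a b = cid D (ccod D a)" "m \<in> Mor D" "mtgt D m = msrc D (cdom D a)"
    "creates_inv_2cells D m" "u \<in> Mor D" "v \<in> Mor D" "msrc D u = msrc D v" "mtgt D u = msrc D m" "mtgt D v = msrc D m"
    "mcomp D (cdom D a) m = mcomp D m u" "mcomp D (ccod D a) m = mcomp D m v"
  shows "\<exists>\<Theta>. \<Theta> \<in> Cel D \<and> cdom D \<Theta> = u \<and> ccod D \<Theta> = v \<and> lwhisk D m \<Theta> = rwhisk D a m"
proof -
  have i: "iso2 D (rwhisk D a m)" using iso_rw assms by blast
  have "cdom D (rwhisk D a m) = mcomp D m u" "ccod D (rwhisk D a m) = mcomp D m v"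
    using assms unfolding rwhisk_def by simp_all
  then obtain h where "iso2 D h" "cdom D h = u" "ccod D h = v" "lwhisk D m h = rwhisk D a m"
    using assms(9) i assms unfolding creates_inv_2cells_def by metis
  then show ?thesis unfolding iso2_def by blast
qed

lemma lift_inv:
  assumes "m \<in> Mor D" "two_mono D m" "T \<in> Cel D" "T' \<in> Cel D" "cdom D T = u" "ccod D T = v" "cdom D T' = v"
    "ccod D T' = u" "mtgt D u = msrc D m"
    "lwhisk D m T = rwhisk D a m" "lwhisk D m T' = rwhisk D b m"
    "a \<in> Cel D" "b \<in> Cel D" "cdom D b = ccod D a" "ccod D b = cdom D a"
    "vcomp D b a = cid D (cdom D a)" "mtgt D m = msrc D (cdom D a)" "mcomp D (cdom D a) m = mcomp D m u"
  shows "vcomp D T' T = cid D u"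
proof -
  have "lwhisk D m (vcomp D T' T) = vcomp D (lwhisk D m T') (lwhisk D m T)"
    using assms by (intro lw_vcomp) auto
  also have "\<dots> = vcomp D (rwhisk D b m) (rwhisk D a m)" using assms by simp
  also have "\<dots> = rwhisk D (vcomp D b a) m" by (rule rw_vcomp[symmetric]) (use assms in auto)
  also have "\<dots> = cid D (mcomp D m u)" using assms unfolding rwhisk_def by (simp add: hcomp_cid)
  also have "\<dots> = lwhisk D m (cid D u)" using assms unfolding lwhisk_def
    by (metis cel_dom hcomp_cid)
  finally have e: "lwhisk D m (vcomp D T' T) = lwhisk D m (cid D u)" .
  show ?thesis using assms(2) e assms unfolding two_mono_def
    by (metis cel_dom cid_cel cid_cod cid_dom vcomp_cel vcomp_cod vcomp_dom)
qed


lemma modif_lift: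
  assumes c: "Fa \<in> Cel D" "Ga \<in> Cel D" "mx \<in> Mor D" "my \<in> Mor D" "Gx \<in> Cel D" "Gy \<in> Cel D" "Tx \<in> Cel D" "Ty \<in> Cel D"
    and s: "msrc D (cdom D Fa) = msrc D mx" "mtgt D (cdom D Fa) = msrc D my"
    "mtgt D mx = msrc D (cdom D Ga)" "mtgt D my = mtgt D (cdom D Ga)"
    "msrc D (cdom D Gx) = mtgt D mx" "mtgt D (cdom D Gx) = mtgt D mx"
    "msrc D (cdom D Gy) = mtgt D my" "mtgt D (cdom D Gy) = mtgt D my"
    "msrc D (cdom D Tx) = msrc D mx" "mtgt D (cdom D Tx) = msrc D mx"
    "msrc D (cdom D Ty) = msrc D my" "mtgt D (cdom D Ty) = msrc D my"
    and nat: "hcomp D Ga (cid D mx) = hcomp D (cid D my) Fa"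
    and md: "hcomp D Ga Gx = hcomp D Gy Ga"
    and lx: "lwhisk D mx Tx = rwhisk D Gx mx"
    and ly: "lwhisk D my Ty = rwhisk D Gy my"
    and mono: "two_mono D my"
    and dm: "cdom D (hcomp D Fa Tx) = cdom D (hcomp D Ty Fa)"
    and cd: "ccod D (hcomp D Fa Tx) = ccod D (hcomp D Ty Fa)"
  shows "hcomp D Fa Tx = hcomp D Ty Fa"
proof -
  have "hcomp D (cid D my) (hcomp D Fa Tx) = hcomp D (hcomp D (cid D my) Fa) Tx"
    using c s by (intro hassoc) auto
  also have "\<dots> = hcomp D (hcomp D Ga (cid D mx)) Tx" by (simp add: nat)
  also have "\<dots> = hcomp D Ga (hcomp D (cid D mx) Tx)"
    using c s by (intro hassoc[symmetric]) auto
  also have "\<dots> = hcomp D Ga (hcomp D Gx (cid D mx))" using lx unfolding lwhisk_def rwhisk_def by simp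
  also have "\<dots> = hcomp D (hcomp D Ga Gx) (cid D mx)"
    using c s by (intro hassoc) auto
  also have "\<dots> = hcomp D (hcomp D Gy Ga) (cid D mx)" by (simp add: md)
  also have "\<dots> = hcomp D Gy (hcomp D Ga (cid D mx))"
    using c s by (intro hassoc[symmetric]) auto
  also have "\<dots> = hcomp D Gy (hcomp D (cid D my) Fa)" by (simp add: nat)
  also have "\<dots> = hcomp D (hcomp D Gy (cid D my)) Fa"
    using c s by (intro hassoc) auto
  also have "\<dots> = hcomp D (hcomp D (cid D my) Ty) Fa" using ly unfolding lwhisk_def rwhisk_def by simp
  also have "\<dots> = hcomp D (cid D my) (hcomp D Ty Fa)"
    using c s by (intro hassoc[symmetric]) auto
  finally have e: "lwhisk D my (hcomp D Fa Tx) = lwhisk D my (hcomp D Ty Fa)" unfolding lwhisk_def .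
  have m1: "hcomp D Fa Tx \<in> Cel D" "hcomp D Ty Fa \<in> Cel D" using c s by auto
  have m2: "mtgt D (cdom D (hcomp D Fa Tx)) = msrc D my" using c s by simp
  show ?thesis using mono m1 m2 dm cd e unfolding two_mono_def by metis
qed

end


theorem corollary4p2p1:
  fixes C :: "('o1, 'm1, 'c1) two_cat" and D :: "('o2, 'm2, 'c2) two_cat"
    and E M :: "'m2 set"
  assumes "two_category C" and "two_category D"
    and "enhanced_fs D E M"
    and "separates_parallel_pairs D E M"
    and "\<forall>e\<in>E. two_epi D e"
    and "\<forall>m\<in>M. two_mono D m"
    and "\<forall>m\<in>M. creates_inv_2cells D m"
  shows "rigid_functor_cat C D M"
proof -
  interpret Cc: tc C by (rule tc.intro) (fact assms(1))
  interpret Dd: tc D by (rule tc.intro) (fact assms(2))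
  show ?thesis unfolding rigid_functor_cat_def
  proof (intro allI impI, elim conjE)
    fix F G :: "('o1, 'm1, 'c1, 'o2, 'm2, 'c2) two_functor" and \<mu> \<alpha>
    assume F: "is_two_functor C D F" and G: "is_two_functor C D G" and mu: "is_two_nat C D F G \<mu>"
      and muM: "\<forall>x\<in>Obj C. \<mu> x \<in> M" and al: "is_two_nat C D G F \<alpha>"
      and iso: "nat_iso C D G G (nat_comp D \<mu> \<alpha>) (nat_id D G)"
    obtain \<Gamma> \<Gamma>' where g1: "is_modification C D G G (nat_comp D \<mu> \<alpha>) (nat_id D G) \<Gamma>"
      and g2: "is_modification C D G G (nat_id D G) (nat_comp D \<mu> \<alpha>) \<Gamma>'"
      and inv: "\<forall>x\<in>Obj C. vcomp D (\<Gamma>' x) (\<Gamma> x) = cid D (nat_comp D \<mu> \<alpha> x) \<and>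
                 vcomp D (\<Gamma> x) (\<Gamma>' x) = cid D (nat_id D G x)"
      using iso unfolding nat_iso_def by blast
    have Fo: "\<And>x. x \<in> Obj C \<Longrightarrow> fobj F x \<in> Obj D" using F unfolding is_two_functor_def by blast
    have Go: "\<And>x. x \<in> Obj C \<Longrightarrow> fobj G x \<in> Obj D" using G unfolding is_two_functor_def by blast
    have Fm: "\<And>f. f \<in> Mor C \<Longrightarrow> fmor F f \<in> Mor D \<and> msrc D (fmor F f) = fobj F (msrc C f) \<and>
                 mtgt D (fmor F f) = fobj F (mtgt C f)" using F unfolding is_two_functor_def by blast
    have Gm: "\<And>f. f \<in> Mor C \<Longrightarrow> fmor G f \<in> Mor D \<and> msrc D (fmor G f) = fobj G (msrc C f) \<and>
                 mtgt D (fmor G f) = fobj G (mtgt C f)" using G unfolding is_two_functor_def by blast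
    have Fc: "\<And>a. a \<in> Cel C \<Longrightarrow> fcell F a \<in> Cel D \<and> cdom D (fcell F a) = fmor F (cdom C a) \<and>
                 ccod D (fcell F a) = fmor F (ccod C a)" using F unfolding is_two_functor_def by blast
    have Gc: "\<And>a. a \<in> Cel C \<Longrightarrow> fcell G a \<in> Cel D \<and> cdom D (fcell G a) = fmor G (cdom C a) \<and>
                 ccod D (fcell G a) = fmor G (ccod C a)" using G unfolding is_two_functor_def by blast
    have mu1: "\<And>x. x \<in> Obj C \<Longrightarrow> \<mu> x \<in> Mor D \<and> msrc D (\<mu> x) = fobj F x \<and> mtgt D (\<mu> x) = fobj G x"
      using mu unfolding is_two_nat_def by blast
    have al1: "\<And>x. x \<in> Obj C \<Longrightarrow> \<alpha> x \<in> Mor D \<and> msrc D (\<alpha> x) = fobj G x \<and> mtgt D (\<alpha> x) = fobj F x"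
      using al unfolding is_two_nat_def by blast
    have mun: "\<And>f. f \<in> Mor C \<Longrightarrow> mcomp D (fmor G f) (\<mu> (msrc C f)) = mcomp D (\<mu> (mtgt C f)) (fmor F f)"
      using mu unfolding is_two_nat_def by blast
    have aln: "\<And>f. f \<in> Mor C \<Longrightarrow> mcomp D (fmor F f) (\<alpha> (msrc C f)) = mcomp D (\<alpha> (mtgt C f)) (fmor G f)"
      using al unfolding is_two_nat_def by blast
    have mun2: "\<And>a. a \<in> Cel C \<Longrightarrow> hcomp D (fcell G a) (cid D (\<mu> (msrc C (cdom C a)))) =
                 hcomp D (cid D (\<mu> (mtgt C (cdom C a)))) (fcell F a)"
      using mu unfolding is_two_nat_def by blast
    have G1: "\<And>x. x \<in> Obj C \<Longrightarrow> \<Gamma> x \<in> Cel D \<and> cdom D (\<Gamma> x) = mcomp D (\<mu> x) (\<alpha> x) \<and> ccod D (\<Gamma> x) = mid D (fobj G x)"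
      using g1 unfolding is_modification_def nat_comp_def nat_id_def by blast
    have G2: "\<And>x. x \<in> Obj C \<Longrightarrow> \<Gamma>' x \<in> Cel D \<and> ccod D (\<Gamma>' x) = mcomp D (\<mu> x) (\<alpha> x) \<and> cdom D (\<Gamma>' x) = mid D (fobj G x)"
      using g2 unfolding is_modification_def nat_comp_def nat_id_def by blast
    have G1n: "\<And>a. a \<in> Cel C \<Longrightarrow> hcomp D (fcell G a) (\<Gamma> (msrc C (cdom C a))) = hcomp D (\<Gamma> (mtgt C (cdom C a))) (fcell G a)"
      using g1 unfolding is_modification_def by blast
    have G2n: "\<And>a. a \<in> Cel C \<Longrightarrow> hcomp D (fcell G a) (\<Gamma>' (msrc C (cdom C a))) = hcomp D (\<Gamma>' (mtgt C (cdom C a))) (fcell G a)"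
      using g2 unfolding is_modification_def by blast
    have inv1: "\<And>x. x \<in> Obj C \<Longrightarrow> vcomp D (\<Gamma>' x) (\<Gamma> x) = cid D (mcomp D (\<mu> x) (\<alpha> x))"
      and inv2: "\<And>x. x \<in> Obj C \<Longrightarrow> vcomp D (\<Gamma> x) (\<Gamma>' x) = cid D (mid D (fobj G x))"
      using inv unfolding nat_comp_def nat_id_def by auto
    have mono: "\<And>x. x \<in> Obj C \<Longrightarrow> two_mono D (\<mu> x)" using muM assms(6) by blast
    have cre: "\<And>x. x \<in> Obj C \<Longrightarrow> creates_inv_2cells D (\<mu> x)" using muM assms(7) by blast
    have as1: "\<And>x. x \<in> Obj C \<Longrightarrow> mcomp D (mcomp D (\<mu> x) (\<alpha> x)) (\<mu> x) = mcomp D (\<mu> x) (mcomp D (\<alpha> x) (\<mu> x))"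
      using mu1 al1 by (metis Dd.assoc)
    have id1: "\<And>x. x \<in> Obj C \<Longrightarrow> mcomp D (mid D (fobj G x)) (\<mu> x) = mcomp D (\<mu> x) (mid D (fobj F x))"
      using mu1 Dd.idl Dd.idr by metis
    have "\<forall>x\<in>Obj C. \<exists>T. T \<in> Cel D \<and> cdom D T = mcomp D (\<alpha> x) (\<mu> x) \<and> ccod D T = mid D (fobj F x) \<and>
            lwhisk D (\<mu> x) T = rwhisk D (\<Gamma> x) (\<mu> x)"
    proof
      fix x assume x: "x \<in> Obj C"
      show "\<exists>T. T \<in> Cel D \<and> cdom D T = mcomp D (\<alpha> x) (\<mu> x) \<and> ccod D T = mid D (fobj F x) \<and>
            lwhisk D (\<mu> x) T = rwhisk D (\<Gamma> x) (\<mu> x)"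
      proof -
        note m = mu1[OF x] and a = al1[OF x] and g1 = G1[OF x] and g2 = G2[OF x]
        show ?thesis
        proof (rule Dd.create[where a="\<Gamma> x" and b="\<Gamma>' x"])
          show "\<Gamma> x \<in> Cel D" "\<Gamma>' x \<in> Cel D" "cdom D (\<Gamma>' x) = ccod D (\<Gamma> x)" "ccod D (\<Gamma>' x) = cdom D (\<Gamma> x)"
            using g1 g2 by auto
          show "vcomp D (\<Gamma>' x) (\<Gamma> x) = cid D (cdom D (\<Gamma> x))" using inv1[OF x] g1 by simp
          show "vcomp D (\<Gamma> x) (\<Gamma>' x) = cid D (ccod D (\<Gamma> x))" using inv2[OF x] g1 by simp
          show "\<mu> x \<in> Mor D" using m by simp
          show "mtgt D (\<mu> x) = msrc D (cdom D (\<Gamma> x))" using m a g1 by simp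
          show "creates_inv_2cells D (\<mu> x)" using cre[OF x] .
          show "mcomp D (\<alpha> x) (\<mu> x) \<in> Mor D" using m a by simp
          show "mid D (fobj F x) \<in> Mor D" using Fo[OF x] by simp
          show "msrc D (mcomp D (\<alpha> x) (\<mu> x)) = msrc D (mid D (fobj F x))" using m a Fo[OF x] by simp
          show "mtgt D (mcomp D (\<alpha> x) (\<mu> x)) = msrc D (\<mu> x)" using m a by simp
          show "mtgt D (mid D (fobj F x)) = msrc D (\<mu> x)" using m Fo[OF x] by simp
          show "mcomp D (cdom D (\<Gamma> x)) (\<mu> x) = mcomp D (\<mu> x) (mcomp D (\<alpha> x) (\<mu> x))" using g1 as1[OF x] by simp
          show "mcomp D (ccod D (\<Gamma> x)) (\<mu> x) = mcomp D (\<mu> x) (mid D (fobj F x))" using g1 id1[OF x] by simp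
        qed
      qed
    qed
    then have "\<exists>T. \<forall>x\<in>Obj C. T x \<in> Cel D \<and> cdom D (T x) = mcomp D (\<alpha> x) (\<mu> x) \<and> ccod D (T x) = mid D (fobj F x) \<and>
            lwhisk D (\<mu> x) (T x) = rwhisk D (\<Gamma> x) (\<mu> x)" by (rule bchoice)
    then obtain T where T: "\<forall>x\<in>Obj C. T x \<in> Cel D \<and> cdom D (T x) = mcomp D (\<alpha> x) (\<mu> x) \<and> ccod D (T x) = mid D (fobj F x) \<and>
            lwhisk D (\<mu> x) (T x) = rwhisk D (\<Gamma> x) (\<mu> x)" by (elim exE)
    have "\<forall>x\<in>Obj C. \<exists>T. T \<in> Cel D \<and> ccod D T = mcomp D (\<alpha> x) (\<mu> x) \<and> cdom D T = mid D (fobj F x) \<and>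
            lwhisk D (\<mu> x) T = rwhisk D (\<Gamma>' x) (\<mu> x)"
    proof
      fix x assume x: "x \<in> Obj C"
      show "\<exists>T. T \<in> Cel D \<and> ccod D T = mcomp D (\<alpha> x) (\<mu> x) \<and> cdom D T = mid D (fobj F x) \<and>
            lwhisk D (\<mu> x) T = rwhisk D (\<Gamma>' x) (\<mu> x)"
      proof -
        note m = mu1[OF x] and a = al1[OF x] and g1 = G1[OF x] and g2 = G2[OF x]
        have "\<exists>T. T \<in> Cel D \<and> cdom D T = mid D (fobj F x) \<and> ccod D T = mcomp D (\<alpha> x) (\<mu> x) \<and>
            lwhisk D (\<mu> x) T = rwhisk D (\<Gamma>' x) (\<mu> x)"
          by (rule Dd.create[where a="\<Gamma>' x" and b="\<Gamma> x"])
            (use g1 g2 inv1[OF x] inv2[OF x] m a cre[OF x] Fo[OF x] Go[OF x] as1[OF x] id1[OF x] in simp_all)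
        then show ?thesis by blast
      qed
    qed
    then have "\<exists>T'. \<forall>x\<in>Obj C. T' x \<in> Cel D \<and> ccod D (T' x) = mcomp D (\<alpha> x) (\<mu> x) \<and> cdom D (T' x) = mid D (fobj F x) \<and>
            lwhisk D (\<mu> x) (T' x) = rwhisk D (\<Gamma>' x) (\<mu> x)" by (rule bchoice)
    then obtain T' where T': "\<forall>x\<in>Obj C. T' x \<in> Cel D \<and> ccod D (T' x) = mcomp D (\<alpha> x) (\<mu> x) \<and> cdom D (T' x) = mid D (fobj F x) \<and>
            lwhisk D (\<mu> x) (T' x) = rwhisk D (\<Gamma>' x) (\<mu> x)" by (elim exE)
    have i1: "vcomp D (T' x) (T x) = cid D (mcomp D (\<alpha> x) (\<mu> x))" if x: "x \<in> Obj C" for x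
      by (rule Dd.lift_inv[where m="\<mu> x" and v="mid D (fobj F x)" and a="\<Gamma> x" and b="\<Gamma>' x"])
        (use mu1[OF x] al1[OF x] G1[OF x] G2[OF x] inv1[OF x] mono[OF x] as1[OF x] Fo[OF x] Go[OF x]
          T[rule_format, OF x] T'[rule_format, OF x] in simp_all)
    have i2: "vcomp D (T x) (T' x) = cid D (mid D (fobj F x))" if x: "x \<in> Obj C" for x
      by (rule Dd.lift_inv[where m="\<mu> x" and v="mcomp D (\<alpha> x) (\<mu> x)" and a="\<Gamma>' x" and b="\<Gamma> x"])
        (use mu1[OF x] al1[OF x] G1[OF x] G2[OF x] inv2[OF x] mono[OF x] id1[OF x] Fo[OF x] Go[OF x]
          T[rule_format, OF x] T'[rule_format, OF x] in simp_all)
    have nateq: "mcomp D (fmor F h) (mcomp D (\<alpha> (msrc C h)) (\<mu> (msrc C h))) =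
        mcomp D (mcomp D (\<alpha> (mtgt C h)) (\<mu> (mtgt C h))) (fmor F h)" if h: "h \<in> Mor C" for h
    proof -
      have x: "msrc C h \<in> Obj C" and y: "mtgt C h \<in> Obj C" using h by simp_all
      note fx = mu1[OF x] al1[OF x] Fo[OF x] Go[OF x] and fy = mu1[OF y] al1[OF y] Fo[OF y] Go[OF y]
        and fh = Fm[OF h] Gm[OF h]
      have "mcomp D (fmor F h) (mcomp D (\<alpha> (msrc C h)) (\<mu> (msrc C h))) =
          mcomp D (mcomp D (fmor F h) (\<alpha> (msrc C h))) (\<mu> (msrc C h))"
        using fx fh by (simp add: Dd.assoc)
      also have "\<dots> = mcomp D (mcomp D (\<alpha> (mtgt C h)) (fmor G h)) (\<mu> (msrc C h))" using aln[OF h] by simp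
      also have "\<dots> = mcomp D (\<alpha> (mtgt C h)) (mcomp D (fmor G h) (\<mu> (msrc C h)))"
        using fx fy fh by (simp add: Dd.assoc)
      also have "\<dots> = mcomp D (\<alpha> (mtgt C h)) (mcomp D (\<mu> (mtgt C h)) (fmor F h))" using mun[OF h] by simp
      also have "\<dots> = mcomp D (mcomp D (\<alpha> (mtgt C h)) (\<mu> (mtgt C h))) (fmor F h)"
        using fx fy fh by (simp add: Dd.assoc)
      finally show ?thesis .
    qed
    have cel: "cdom C a \<in> Mor C \<and> ccod C a \<in> Mor C \<and> msrc C (ccod C a) = msrc C (cdom C a) \<and>
        mtgt C (ccod C a) = mtgt C (cdom C a) \<and> msrc C (cdom C a) \<in> Obj C \<and> mtgt C (cdom C a) \<in> Obj C"
      if "a \<in> Cel C" for a using that by simp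
    have idc: "mcomp D (fmor F g) (mid D (fobj F (msrc C g))) = mcomp D (mid D (fobj F (mtgt C g))) (fmor F g)"
      if "g \<in> Mor C" for g using Fm[OF that] Dd.idl Dd.idr by metis
    have mod1: "hcomp D (fcell F a) (T (msrc C (cdom C a))) = hcomp D (T (mtgt C (cdom C a))) (fcell F a)"
      if a: "a \<in> Cel C" for a
    proof -
      note c = cel[OF a]
      have x: "msrc C (cdom C a) \<in> Obj C" and y: "mtgt C (cdom C a) \<in> Obj C" using c by simp_all
      note fx = mu1[OF x] al1[OF x] Fo[OF x] Go[OF x] G1[OF x] T[rule_format, OF x]
        and fy = mu1[OF y] al1[OF y] Fo[OF y] Go[OF y] G1[OF y] T[rule_format, OF y]
        and fh = Fm[of "cdom C a"] Gm[of "cdom C a"] Fm[of "ccod C a"] Gm[of "ccod C a"] Fc[OF a] Gc[OF a]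
      show ?thesis
        by (rule Dd.modif_lift[where Ga="fcell G a" and mx="\<mu> (msrc C (cdom C a))" and my="\<mu> (mtgt C (cdom C a))"
              and Gx="\<Gamma> (msrc C (cdom C a))" and Gy="\<Gamma> (mtgt C (cdom C a))"])
          (use c fx fy fh mun2[OF a] G1n[OF a] mono[OF y] nateq[of "cdom C a"] idc[of "ccod C a"] in simp_all)
    qed
    have mod2: "hcomp D (fcell F a) (T' (msrc C (cdom C a))) = hcomp D (T' (mtgt C (cdom C a))) (fcell F a)"
      if a: "a \<in> Cel C" for a
    proof -
      note c = cel[OF a]
      have x: "msrc C (cdom C a) \<in> Obj C" and y: "mtgt C (cdom C a) \<in> Obj C" using c by simp_all
      note fx = mu1[OF x] al1[OF x] Fo[OF x] Go[OF x] G2[OF x] T'[rule_format, OF x]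
        and fy = mu1[OF y] al1[OF y] Fo[OF y] Go[OF y] G2[OF y] T'[rule_format, OF y]
        and fh = Fm[of "cdom C a"] Gm[of "cdom C a"] Fm[of "ccod C a"] Gm[of "ccod C a"] Fc[OF a] Gc[OF a]
      show ?thesis
        by (rule Dd.modif_lift[where Ga="fcell G a" and mx="\<mu> (msrc C (cdom C a))" and my="\<mu> (mtgt C (cdom C a))"
              and Gx="\<Gamma>' (msrc C (cdom C a))" and Gy="\<Gamma>' (mtgt C (cdom C a))"])
          (use c fx fy fh mun2[OF a] G2n[OF a] mono[OF y] nateq[of "ccod C a"] idc[of "cdom C a"] in simp_all)
    qed
    show "nat_iso C D F F (nat_comp D \<alpha> \<mu>) (nat_id D F)"
      unfolding nat_iso_def
    proof (intro exI conjI ballI)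
      show "is_modification C D F F (nat_comp D \<alpha> \<mu>) (nat_id D F) T"
        unfolding is_modification_def nat_comp_def nat_id_def using T mod1 by simp
      show "is_modification C D F F (nat_id D F) (nat_comp D \<alpha> \<mu>) T'"
        unfolding is_modification_def nat_comp_def nat_id_def using T' mod2 by simp
      fix x assume "x \<in> Obj C"
      then show "vcomp D (T' x) (T x) = cid D (nat_comp D \<alpha> \<mu> x)"
        "vcomp D (T x) (T' x) = cid D (nat_id D F x)"
        using i1 i2 unfolding nat_comp_def nat_id_def by simp_all
    qed
  qed
qed

end
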